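(* Let $P=(p_{xy})$ be an ergodic reversible Markov chain on $X=\{1,\ldots,n\}$ with stationary distribution $\pi$, and assume that all eigenvalues of $P$ are positive. Then: (1) for all $z\in X$, $\mathsf{QHT}(P,z)\le\sqrt{\mathsf{HT}(P,z)/2}$; (2) for all $z\in X$ and all $\varepsilon\in(0,1)$, $\mathsf{QHT}_\varepsilon(P,z)=\sqrt{\mathsf{HT}_\varepsilon(P,z)}$.
   Context: Classical quantities: $\mathsf{HT}(P,z)$ is the expected number of steps for the chain started from $\pi$ to reach $z$. Let $P_{-z}$ be $P$ with row and column $z$ deleted, $\Pi_{-z}=\mathrm{diag}(\pi_x)_{x\ne z}$, $S_{-z}=\sqrt{\Pi_{-z}}P_{-z}\sqrt{\Pi_{-z}}^{-1}$ (real symmetric with eigenvalues in $[0,1)$), $v_1,\ldots,v_{n-1}$ an orthonormal eigenbasis of $S_{-z}$ with eigenvalues $\cos\theta_j$, $0<\theta_j\le\pi/2$, and $\sqrt{\pi_{-z}}=\sum_j\nu_jv_j$ (entrywise square root of $\pi$ without coordinate $z$). $H_z$ takes value $1/\theta_j^2$ with probability $\nu_j^2$ and $0$ with probability $1-\sum_j\nu_j^2$; $\mathsf{HT}_\varepsilon(P,z)=\min\{y:\Pr[H_z>y]\le\varepsilon\}$. Quantum quantities: on $\mathcal H=\mathbb C^{X\times X}$ let $|p_x\rangle=\sum_y\sqrt{p_{xy}}|y\rangle$, $\mathcal A=\mathrm{Span}(|x\rangle|p_x\rangle:x\in X)$, $\mathrm{ref}(\mathcal A)=2\Pi_{\mathcal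 A}-I$ where $\Pi_{\mathcal A}$ is the orthogonal projector onto $\mathcal A$, and $\mathsf{SWAP}|x\rangle|y\rangle=|y\rangle|x\rangle$. Set $U_2=\mathsf{SWAP}\cdot\mathrm{ref}(\mathcal A)$, $|\phi_0\rangle=\sum_x\sqrt{\pi_x}|x\rangle|p_x\rangle$, $|\mu\rangle=|z\rangle|p_z\rangle$, $U=U_2(I-2|\mu\rangle\langle\mu|)$ and $|\tilde\phi_0\rangle=|\phi_0\rangle-\langle\mu|\phi_0\rangle|\mu\rangle=\sum_{x\ne z}\sqrt{\pi_x}|x\rangle|p_x\rangle$. Decompose $|\tilde\phi_0\rangle=\delta_0|w_0\rangle+\sum_j\delta_j(|w_j^+\rangle+|w_j^-\rangle)+\delta_{-1}|w_{-1}\rangle$ with real coefficients in unit eigenvectors of the real unitary $U$ (eigenvalues $1$, $-1$, and $e^{\pm i\alpha_j}$ with $0<\alpha_j<\pi$, $|w_j^-\rangle=\overline{|w_j^+\rangle}$). $\mathit{QH}$ takes value $1/\alpha_j$ w.p. $2\delta_j^2$, $1/\pi$ w.p. $\delta_{-1}^2$, $0$ otherwise. Then $\mathsf{QHT}(P,z)=\mathbb E[\mathit{QH}]$ and $\mathsf{QHT}_\varepsilon(P,z)=\min\{y:\Pr[\mathit{QH}>y]\le\varepsilon\}$. *)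

theory Defs
  imports Complex_Main
begin

definition markov :: "('a::finite \<Rightarrow> 'a \<Rightarrow> real) \<Rightarrow> bool" where
  "markov P \<longleftrightarrow> (\<forall>x y. P x y \<ge> 0) \<and> (\<forall>x. (\<Sum>y\<in>UNIV. P x y) = 1)"

fun rpow :: "'a set \<Rightarrow> ('a::finite \<Rightarrow> 'a \<Rightarrow> real) \<Rightarrow> nat \<Rightarrow> 'a \<Rightarrow> 'a \<Rightarrow> real" where
  "rpow A P 0 x y = (if x = y then 1 else 0)"
| "rpow A P (Suc t) x y = (\<Sum>w\<in>A. rpow A P t x w * P w y)"

abbreviation mpow :: "('a::finite \<Rightarrow> 'a \<Rightarrow> real) \<Rightarrow> nat \<Rightarrow> 'a \<Rightarrow> 'a \<Rightarrow> real" where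
  "mpow P t \<equiv> rpow UNIV P t"

definition irreducible_chain :: "('a::finite \<Rightarrow> 'a \<Rightarrow> real) \<Rightarrow> bool" where
  "irreducible_chain P \<longleftrightarrow> (\<forall>x y. \<exists>t. mpow P t x y > 0)"

definition aperiodic_chain :: "('a::finite \<Rightarrow> 'a \<Rightarrow> real) \<Rightarrow> bool" where
  "aperiodic_chain P \<longleftrightarrow> (\<forall>x. Gcd {t. t > 0 \<and> mpow P t x x > 0} = 1)"

definition ergodic_chain :: "('a::finite \<Rightarrow> 'a \<Rightarrow> real) \<Rightarrow> bool" where
  "ergodic_chain P \<longleftrightarrow> markov P \<and> irreducible_chain P \<and> aperiodic_chain P"

definition stationary_distr :: "('a::finite \<Rightarrow> 'a \<Rightarrow> real) \<Rightarrow> ('a \<Rightarrow> real) \<Rightarrow> bool" where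
  "stationary_distr P st \<longleftrightarrow> (\<forall>x. st x \<ge> 0) \<and> (\<Sum>x\<in>UNIV. st x) = 1 \<and>
     (\<forall>y. (\<Sum>x\<in>UNIV. st x * P x y) = st y)"

definition reversible_chain :: "('a::finite \<Rightarrow> 'a \<Rightarrow> real) \<Rightarrow> ('a \<Rightarrow> real) \<Rightarrow> bool" where
  "reversible_chain P st \<longleftrightarrow> (\<forall>x y. st x * P x y = st y * P y x)"

definition matrix_eigenvalue :: "('a::finite \<Rightarrow> 'a \<Rightarrow> real) \<Rightarrow> complex \<Rightarrow> bool" where
  "matrix_eigenvalue P lam \<longleftrightarrow>
     (\<exists>v :: 'a \<Rightarrow> complex. v \<noteq> (\<lambda>_. 0) \<and> (\<forall>x. (\<Sum>y\<in>UNIV. complex_of_real (P x y) * v y) = lam * v x))"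

definition all_eigenvalues_positive :: "('a::finite \<Rightarrow> 'a \<Rightarrow> real) \<Rightarrow> bool" where
  "all_eigenvalues_positive P \<longleftrightarrow>
     (\<forall>lam. matrix_eigenvalue P lam \<longrightarrow> Im lam = 0 \<and> Re lam > 0)"

text \<open>Pr[T > t] for the chain started from st, T = min {t >= 0. X_t = z}:
  the probability that X_0, ..., X_t all differ from z.\<close>
definition not_hit_prob :: "('a::finite \<Rightarrow> 'a \<Rightarrow> real) \<Rightarrow> ('a \<Rightarrow> real) \<Rightarrow> 'a \<Rightarrow> nat \<Rightarrow> real" where
  "not_hit_prob P st z t = (\<Sum>x\<in>UNIV - {z}. \<Sum>y\<in>UNIV - {z}. st x * rpow (UNIV - {z}) P t x y)"

text \<open>HT(P,z) = E[T] = sum over t >= 0 of Pr[T > t].\<close>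
definition HT :: "('a::finite \<Rightarrow> 'a \<Rightarrow> real) \<Rightarrow> ('a \<Rightarrow> real) \<Rightarrow> 'a \<Rightarrow> real" where
  "HT P st z = (\<Sum>t. not_hit_prob P st z t)"

definition Smat :: "('a::finite \<Rightarrow> 'a \<Rightarrow> real) \<Rightarrow> ('a \<Rightarrow> real) \<Rightarrow> 'a \<Rightarrow> 'a \<Rightarrow> real" where
  "Smat P st x y = sqrt (st x) * P x y / sqrt (st y)"

definition classical_spectral_data ::
  "('a::finite \<Rightarrow> 'a \<Rightarrow> real) \<Rightarrow> ('a \<Rightarrow> real) \<Rightarrow> 'a \<Rightarrow> nat set \<Rightarrow> (nat \<Rightarrow> 'a \<Rightarrow> real) \<Rightarrow> (nat \<Rightarrow> real) \<Rightarrow> bool" where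
  "classical_spectral_data P st z J v \<theta> \<longleftrightarrow>
     finite J \<and> card J = card (UNIV :: 'a set) - 1 \<and>
     (\<forall>j\<in>J. \<forall>k\<in>J. (\<Sum>x\<in>UNIV - {z}. v j x * v k x) = (if j = k then 1 else 0)) \<and>
     (\<forall>j\<in>J. \<forall>x\<in>UNIV - {z}. (\<Sum>y\<in>UNIV - {z}. Smat P st x y * v j y) = cos (\<theta> j) * v j x) \<and>
     (\<forall>j\<in>J. 0 < \<theta> j \<and> \<theta> j \<le> pi / 2)"

text \<open>nu_j = <sqrt(pi_{-z}), v_j>, so that sqrt(pi_{-z}) = sum_j nu_j v_j.\<close>
definition nu_coef :: "('a::finite \<Rightarrow> real) \<Rightarrow> 'a \<Rightarrow> (nat \<Rightarrow> 'a \<Rightarrow> real) \<Rightarrow> nat \<Rightarrow> real" where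
  "nu_coef st z v j = (\<Sum>x\<in>UNIV - {z}. sqrt (st x) * v j x)"

text \<open>Pr[H_z > y], where H_z = 1/theta_j^2 w.p. nu_j^2 and 0 w.p. 1 - sum_j nu_j^2.\<close>
definition H_tail ::
  "('a::finite \<Rightarrow> real) \<Rightarrow> 'a \<Rightarrow> nat set \<Rightarrow> (nat \<Rightarrow> 'a \<Rightarrow> real) \<Rightarrow> (nat \<Rightarrow> real) \<Rightarrow> real \<Rightarrow> real" where
  "H_tail st z J v \<theta> y =
     (\<Sum>j\<in>{j\<in>J. 1 / (\<theta> j)\<^sup>2 > y}. (nu_coef st z v j)\<^sup>2) +
     (if 0 > y then 1 - (\<Sum>j\<in>J. (nu_coef st z v j)\<^sup>2) else 0)"

definition HT_eps ::
  "('a::finite \<Rightarrow> real) \<Rightarrow> 'a \<Rightarrow> nat set \<Rightarrow> (nat \<Rightarrow> 'a \<Rightarrow> real) \<Rightarrow> (nat \<Rightarrow> real) \<Rightarrow> real \<Rightarrow> real" where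
  "HT_eps st z J v \<theta> \<epsilon> = (LEAST y. H_tail st z J v \<theta> y \<le> \<epsilon>)"

type_synonym 'a qvec = "'a \<times> 'a \<Rightarrow> complex"

definition qinner :: "'a::finite qvec \<Rightarrow> 'a qvec \<Rightarrow> complex" where
  "qinner a b = (\<Sum>i\<in>UNIV. cnj (a i) * b i)"

definition qnorm2 :: "'a::finite qvec \<Rightarrow> real" where
  "qnorm2 a = (\<Sum>i\<in>UNIV. (cmod (a i))\<^sup>2)"

definition ket_xpx :: "('a::finite \<Rightarrow> 'a \<Rightarrow> real) \<Rightarrow> 'a \<Rightarrow> 'a qvec" where
  "ket_xpx P x = (\<lambda>(a, b). if a = x then complex_of_real (sqrt (P x b)) else 0)"

text \<open>Orthogonal projector onto A = Span(|x>|p_x>); the |x>|p_x> are orthonormal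
  for a stochastic P, so the projector is sum_x |x,p_x><x,p_x|.\<close>
definition proj_A :: "('a::finite \<Rightarrow> 'a \<Rightarrow> real) \<Rightarrow> 'a qvec \<Rightarrow> 'a qvec" where
  "proj_A P \<psi> = (\<lambda>i. \<Sum>x\<in>UNIV. qinner (ket_xpx P x) \<psi> * ket_xpx P x i)"

definition ref_A :: "('a::finite \<Rightarrow> 'a \<Rightarrow> real) \<Rightarrow> 'a qvec \<Rightarrow> 'a qvec" where
  "ref_A P \<psi> = (\<lambda>i. 2 * proj_A P \<psi> i - \<psi> i)"

definition SWAP :: "'a qvec \<Rightarrow> 'a qvec" where
  "SWAP \<psi> = (\<lambda>(a, b). \<psi> (b, a))"

definition U2 :: "('a::finite \<Rightarrow> 'a \<Rightarrow> real) \<Rightarrow> 'a qvec \<Rightarrow> 'a qvec" where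
  "U2 P \<psi> = SWAP (ref_A P \<psi>)"

definition Uop :: "('a::finite \<Rightarrow> 'a \<Rightarrow> real) \<Rightarrow> 'a \<Rightarrow> 'a qvec \<Rightarrow> 'a qvec" where
  "Uop P z \<psi> = U2 P (\<lambda>i. \<psi> i - 2 * qinner (ket_xpx P z) \<psi> * ket_xpx P z i)"

definition phi0_tilde :: "('a::finite \<Rightarrow> 'a \<Rightarrow> real) \<Rightarrow> ('a \<Rightarrow> real) \<Rightarrow> 'a \<Rightarrow> 'a qvec" where
  "phi0_tilde P st z = (\<lambda>i. \<Sum>x\<in>UNIV - {z}. complex_of_real (sqrt (st x)) * ket_xpx P x i)"

text \<open>Quantum spectral data: |tilde phi_0> = c0 + sum_{j in J} delta_j (|w_j^+> + |w_j^->) + cm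
  where c0 = delta_0 |w_0> (a vector in the 1-eigenspace of U), cm = delta_{-1}|w_{-1}>
  (a vector in the (-1)-eigenspace of U), the |w_j^+> are unit eigenvectors of U with eigenvalue
  e^{i alpha_j}, 0 < alpha_j < pi, |w_j^-> = conj |w_j^+>, all w_j^{+-} orthonormal,
  and the delta_j real.\<close>
definition quantum_spectral_data ::
  "('a::finite \<Rightarrow> 'a \<Rightarrow> real) \<Rightarrow> ('a \<Rightarrow> real) \<Rightarrow> 'a \<Rightarrow> nat set \<Rightarrow> (nat \<Rightarrow> real) \<Rightarrow>
    (nat \<Rightarrow> 'a qvec) \<Rightarrow> (nat \<Rightarrow> real) \<Rightarrow> 'a qvec \<Rightarrow> 'a qvec \<Rightarrow> bool" where
  "quantum_spectral_data P st z J \<alpha> w \<delta> c0 cm \<longleftrightarrow>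
     finite J \<and>
     (\<forall>j\<in>J. 0 < \<alpha> j \<and> \<alpha> j < pi) \<and>
     (\<forall>j\<in>J. Uop P z (w j) = (\<lambda>i. cis (\<alpha> j) * w j i)) \<and>
     (\<forall>j\<in>J. \<forall>k\<in>J. qinner (w j) (w k) = (if j = k then 1 else 0)) \<and>
     (\<forall>j\<in>J. \<forall>k\<in>J. qinner (w j) (\<lambda>i. cnj (w k i)) = 0) \<and>
     Uop P z c0 = c0 \<and>
     Uop P z cm = (\<lambda>i. - cm i) \<and>
     phi0_tilde P st z = (\<lambda>i. c0 i + (\<Sum>j\<in>J. complex_of_real (\<delta> j) * (w j i + cnj (w j i))) + cm i)"

text \<open>QHT(P,z) = E[QH], QH = 1/alpha_j w.p. 2 delta_j^2, 1/pi w.p. delta_{-1}^2, 0 otherwise.\<close>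
definition QHT :: "nat set \<Rightarrow> (nat \<Rightarrow> real) \<Rightarrow> (nat \<Rightarrow> real) \<Rightarrow> 'a::finite qvec \<Rightarrow> real" where
  "QHT J \<alpha> \<delta> cm = (\<Sum>j\<in>J. 2 * (\<delta> j)\<^sup>2 * (1 / \<alpha> j)) + qnorm2 cm * (1 / pi)"

definition QH_tail :: "nat set \<Rightarrow> (nat \<Rightarrow> real) \<Rightarrow> (nat \<Rightarrow> real) \<Rightarrow> 'a::finite qvec \<Rightarrow> real \<Rightarrow> real" where
  "QH_tail J \<alpha> \<delta> cm y =
     (\<Sum>j\<in>{j\<in>J. 1 / \<alpha> j > y}. 2 * (\<delta> j)\<^sup>2) +
     (if 1 / pi > y then qnorm2 cm else 0) +
     (if 0 > y then 1 - (\<Sum>j\<in>J. 2 * (\<delta> j)\<^sup>2) - qnorm2 cm else 0)"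

definition QHT_eps :: "nat set \<Rightarrow> (nat \<Rightarrow> real) \<Rightarrow> (nat \<Rightarrow> real) \<Rightarrow> 'a::finite qvec \<Rightarrow> real \<Rightarrow> real" where
  "QHT_eps J \<alpha> \<delta> cm \<epsilon> = (LEAST y. QH_tail J \<alpha> \<delta> cm y \<le> \<epsilon>)"

end

theory Submission
  imports Defs "HOL-Analysis.Analysis"
begin


lemma sum_UNIV_pair: "(\<Sum>i\<in>(UNIV::('a::finite\<times>'b::finite) set). f i) = (\<Sum>a\<in>UNIV. \<Sum>b\<in>UNIV. f (a,b))"
  by (simp add: sum.cartesian_product flip: UNIV_Times_UNIV)

lemma qinner_ket: "qinner (ket_xpx P x) \<psi> = (\<Sum>b\<in>UNIV. complex_of_real (sqrt (P x b)) * \<psi> (x,b))"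
proof -
  have "qinner (ket_xpx P x) \<psi> = (\<Sum>a\<in>UNIV. if a = x then (\<Sum>b\<in>UNIV. complex_of_real (sqrt (P x b)) * \<psi> (a,b)) else 0)"
    unfolding qinner_def ket_xpx_def sum_UNIV_pair by (rule sum.cong) auto
  then show ?thesis by simp
qed

lemma qinner_sym: "qinner b a = cnj (qinner a b)"
  unfolding qinner_def by (simp add: mult.commute)

lemma qinner_lin_right: "qinner a (\<lambda>i. \<Sum>x\<in>A. c x * f x i) = (\<Sum>x\<in>A. c x * qinner a (f x))"
  unfolding qinner_def by (simp add: sum_distrib_left sum_distrib_right mult.left_commute sum.swap[of _ A])

lemma qinner_lin_left: "qinner (\<lambda>i. \<Sum>x\<in>A. c x * f x i) b = (\<Sum>x\<in>A. cnj (c x) * qinner (f x) b)"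
  by (subst qinner_sym, subst qinner_lin_right) (simp add: qinner_sym[of "f _" b])

lemma ket_orth: assumes "markov P" shows "qinner (ket_xpx P x) (ket_xpx P y) = (if x = y then 1 else 0)"
proof -
  have "qinner (ket_xpx P x) (ket_xpx P y) = (if x = y then (\<Sum>b\<in>UNIV. complex_of_real (P x b)) else 0)"
    unfolding qinner_ket by (simp add: ket_xpx_def) (use assms in \<open>auto simp: markov_def simp flip: of_real_mult\<close>)
  also have "\<dots> = (if x = y then 1 else 0)" using assms unfolding markov_def by (simp flip: of_real_sum)
  finally show ?thesis .
qed

lemma qinner_diff_scale: "qinner a (\<lambda>i. b i - c * d i) = qinner a b - c * qinner a d"
  unfolding qinner_def by (simp add: sum_subtractf sum_distrib_left algebra_simps)

definition Pip :: "('a::finite \<Rightarrow> 'a \<Rightarrow> real) \<Rightarrow> 'a \<Rightarrow> 'a qvec \<Rightarrow> 'a qvec" where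
  "Pip P z \<psi> = (\<lambda>i. \<Sum>x\<in>UNIV - {z}. qinner (ket_xpx P x) \<psi> * ket_xpx P x i)"

lemma Uop_alt: assumes mk: "markov P" shows "Uop P z \<psi> = SWAP (\<lambda>i. 2 * Pip P z \<psi> i - \<psi> i)"
proof -
  let ?m = "qinner (ket_xpx P z) \<psi>"
  define D where "D = (\<lambda>i. \<psi> i - 2 * ?m * ket_xpx P z i)"
  have qD: "qinner (ket_xpx P x) D = qinner (ket_xpx P x) \<psi> - (if x = z then 2 * ?m else 0)" for x
    unfolding D_def using qinner_diff_scale[of "ket_xpx P x" \<psi> "2 * ?m" "ket_xpx P z"]
    by (simp add: ket_orth[OF mk])
  have pr: "proj_A P D i = Pip P z \<psi> i - ?m * ket_xpx P z i" for i
  proof -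
    have "proj_A P D i = (\<Sum>x\<in>UNIV. qinner (ket_xpx P x) \<psi> * ket_xpx P x i) - 2 * ?m * ket_xpx P z i"
      unfolding proj_A_def qD by (simp add: left_diff_distrib sum_subtractf if_distrib[of "\<lambda>t. t * _"] cong: if_cong)
    also have "(\<Sum>x\<in>UNIV. qinner (ket_xpx P x) \<psi> * ket_xpx P x i) = ?m * ket_xpx P z i + Pip P z \<psi> i"
      unfolding Pip_def by (simp add: sum.remove[of UNIV z])
    finally show ?thesis by simp
  qed
  have "ref_A P D = (\<lambda>i. 2 * Pip P z \<psi> i - \<psi> i)"
    unfolding ref_A_def pr by (rule ext) (simp add: D_def algebra_simps)
  then show ?thesis unfolding Uop_def U2_def D_def by simp
qed


lemma qinner_SWAP: "qinner (SWAP a) (SWAP b) = qinner a b"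
  unfolding qinner_def SWAP_def sum_UNIV_pair prod.case by (rule sum.swap)

lemma qinner_2diff: "qinner (\<lambda>i. 2 * X i - a i) (\<lambda>i. 2 * Y i - b i) =
   4 * qinner X Y - 2 * qinner X b - 2 * qinner a Y + qinner a b"
proof -
  have e: "\<And>i. cnj (2 * X i - a i) * (2 * Y i - b i) = 4 * (cnj (X i) * Y i) - 2 * (cnj (X i) * b i) - 2 * (cnj (a i) * Y i) + cnj (a i) * b i"
    by (simp add: algebra_simps)
  show ?thesis unfolding qinner_def e
    by (simp only: sum.distrib sum_subtractf sum_distrib_left[symmetric])
qed

lemma ket_cnj: "cnj (ket_xpx P x i) = ket_xpx P x i"
  unfolding ket_xpx_def by (cases i) auto

context fixes P :: "'a::finite \<Rightarrow> 'a \<Rightarrow> real" and z :: 'a assumes mk: "markov P"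
begin

lemma qinner_Pip_left: "qinner (Pip P z a) b = (\<Sum>x\<in>UNIV-{z}. cnj (qinner (ket_xpx P x) a) * qinner (ket_xpx P x) b)"
  unfolding Pip_def qinner_lin_left ..

lemma qinner_Pip_right: "qinner a (Pip P z b) = (\<Sum>x\<in>UNIV-{z}. cnj (qinner (ket_xpx P x) a) * qinner (ket_xpx P x) b)"
  unfolding Pip_def qinner_lin_right by (simp add: qinner_sym[of a] mult.commute)

lemma ket_Pip: "x \<noteq> z \<Longrightarrow> qinner (ket_xpx P x) (Pip P z b) = qinner (ket_xpx P x) b"
  unfolding Pip_def qinner_lin_right ket_orth[OF mk] by (simp add: if_distrib cong: if_cong)

lemma qinner_Pip_Pip: "qinner (Pip P z a) (Pip P z b) = (\<Sum>x\<in>UNIV-{z}. cnj (qinner (ket_xpx P x) a) * qinner (ket_xpx P x) b)"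
proof -
  have "qinner (Pip P z a) (Pip P z b) = (\<Sum>x\<in>UNIV-{z}. cnj (qinner (ket_xpx P x) a) * qinner (ket_xpx P x) (Pip P z b))"
    by (simp only: Pip_def[of P z a] qinner_lin_left)
  also have "\<dots> = (\<Sum>x\<in>UNIV-{z}. cnj (qinner (ket_xpx P x) a) * qinner (ket_xpx P x) b)"
    by (rule sum.cong) (auto simp: ket_Pip)
  finally show ?thesis .
qed

lemma Uop_unitary: "qinner (Uop P z a) (Uop P z b) = qinner a b"
  apply (simp only: Uop_alt[OF mk] qinner_SWAP qinner_2diff qinner_Pip_Pip)
  apply (simp only: qinner_Pip_left qinner_Pip_right)
  by simp

lemma Uop_cnj: "Uop P z (\<lambda>i. cnj (\<psi> i)) = (\<lambda>i. cnj (Uop P z \<psi> i))"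
proof -
  have k: "qinner (ket_xpx P x) (\<lambda>i. cnj (\<psi> i)) = cnj (qinner (ket_xpx P x) \<psi>)" for x
    unfolding qinner_ket by simp
  have "Pip P z (\<lambda>i. cnj (\<psi> i)) i = cnj (Pip P z \<psi> i)" for i
    unfolding Pip_def k by (simp add: ket_cnj)
  then show ?thesis unfolding Uop_alt[OF mk] SWAP_def by (auto simp: fun_eq_iff)
qed

lemma eigen_orth:
  assumes "Uop P z a = (\<lambda>i. l * a i)" "Uop P z b = (\<lambda>i. m * b i)" "cmod l = 1" "cmod m = 1" "l \<noteq> m"
  shows "qinner a b = 0"
proof -
  have "qinner a b = qinner (\<lambda>i. l * a i) (\<lambda>i. m * b i)"
    using Uop_unitary[of a b] assms by simp
  also have "\<dots> = cnj l * m * qinner a b"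
    unfolding qinner_def by (simp add: sum_distrib_left algebra_simps)
  finally have e: "(1 - cnj l * m) * qinner a b = 0" by (simp add: algebra_simps)
  have "cnj l * l = 1" using assms(3) by (metis complex_norm_square mult.commute of_real_1 power_one)
  then have "cnj l * m \<noteq> 1" using assms(5) by (metis mult.left_neutral mult.assoc mult.commute)
  with e show ?thesis by simp
qed


lemma Pip_apply: "Pip P z w (b, a) = (if b \<noteq> z then qinner (ket_xpx P b) w * complex_of_real (sqrt (P b a)) else 0)"
  unfolding Pip_def by (simp add: ket_xpx_def if_distrib[of "\<lambda>t. _ * t"] cong: if_cong)

lemma eigen_S:
  assumes eig: "Uop P z w = (\<lambda>i. l * w i)" and l0: "l \<noteq> 0" and xz: "x \<noteq> z"
  shows "(\<Sum>y\<in>UNIV-{z}. complex_of_real (sqrt (P x y) * sqrt (P y x)) * qinner (ket_xpx P y) w)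
         = ((l + 1/l)/2) * qinner (ket_xpx P x) w"
proof -
  define u where "u y = qinner (ket_xpx P y) w" for y
  define s where "s = (\<Sum>b\<in>UNIV. complex_of_real (sqrt (P x b)) * w (b, x))"
  have E: "2 * (if b \<noteq> z then u b * complex_of_real (sqrt (P b a)) else 0) - w (b, a) = l * w (a, b)" for a b
  proof -
    have "Uop P z w (a, b) = l * w (a, b)" using eig by simp
    then show ?thesis unfolding Uop_alt[OF mk] SWAP_def by (simp add: Pip_apply u_def split: if_split_asm)
  qed
  have P0: "\<And>a b. 0 \<le> P a b" and P1: "\<And>a. (\<Sum>b\<in>UNIV. P a b) = 1" using mk by (auto simp: markov_def)
  have sq: "complex_of_real (sqrt (P a b)) * complex_of_real (sqrt (P a b)) = complex_of_real (P a b)" for a b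
    using P0[of a b] by (simp flip: of_real_mult)
  have ux: "u x = (\<Sum>b\<in>UNIV. complex_of_real (sqrt (P x b)) * w (x, b))" unfolding u_def qinner_ket ..
  have "l * s = (\<Sum>b\<in>UNIV. complex_of_real (sqrt (P x b)) * (l * w (b, x)))"
    unfolding s_def sum_distrib_left by (simp add: algebra_simps)
  also have "\<dots> = (\<Sum>b\<in>UNIV. complex_of_real (sqrt (P x b)) * (2 * u x * complex_of_real (sqrt (P x b)) - w (x, b)))"
    using xz by (simp add: E[of x b for b, symmetric] mult.assoc)
  also have "\<dots> = 2 * u x * (\<Sum>b\<in>UNIV. complex_of_real (P x b)) - u x"
  proof -
    have "(\<Sum>b\<in>UNIV. complex_of_real (sqrt (P x b)) * (2 * u x * complex_of_real (sqrt (P x b)) - w (x, b)))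
       = (\<Sum>b\<in>UNIV. 2 * u x * complex_of_real (P x b)) - (\<Sum>b\<in>UNIV. complex_of_real (sqrt (P x b)) * w (x, b))"
      by (simp add: sum_subtractf algebra_simps flip: sq)
    then show ?thesis by (simp add: sum_distrib_left ux)
  qed
  also have "\<dots> = u x" using P1[of x] by (simp flip: of_real_sum)
  finally have i: "u x = l * s" by simp
  have "l * u x = (\<Sum>b\<in>UNIV. complex_of_real (sqrt (P x b)) * (l * w (x, b)))"
    unfolding ux sum_distrib_left by (simp add: algebra_simps)
  also have "\<dots> = (\<Sum>b\<in>UNIV. complex_of_real (sqrt (P x b)) * (2 * (if b \<noteq> z then u b * complex_of_real (sqrt (P b x)) else 0) - w (b, x)))"
    by (simp only: E[of b x for b, symmetric])
  also have "\<dots> = 2 * (\<Sum>b\<in>UNIV. (if b \<noteq> z then complex_of_real (sqrt (P x b) * sqrt (P b x)) * u b else 0)) - s"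
    unfolding s_def by (simp add: sum_subtractf sum_distrib_left algebra_simps if_distrib[of "\<lambda>t. _ * t"] cong: if_cong)
  also have "(\<Sum>b\<in>UNIV. (if b \<noteq> z then complex_of_real (sqrt (P x b) * sqrt (P b x)) * u b else 0))
      = (\<Sum>y\<in>UNIV-{z}. complex_of_real (sqrt (P x y) * sqrt (P y x)) * u y)"
    by (simp add: sum.remove[of UNIV z])
  finally have ii: "l * u x = 2 * (\<Sum>y\<in>UNIV-{z}. complex_of_real (sqrt (P x y) * sqrt (P y x)) * u y) - s" .
  have "s = u x / l" using i l0 by simp
  with ii have "(\<Sum>y\<in>UNIV-{z}. complex_of_real (sqrt (P x y) * sqrt (P y x)) * u y) = (l * u x + u x / l) / 2"
    by (simp add: algebra_simps)
  then show ?thesis unfolding u_def by (simp add: algebra_simps add_divide_distrib)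
qed

end




lemma rpow_nonneg: "(\<And>a b. 0 \<le> P a b) \<Longrightarrow> 0 \<le> rpow A P t x y"
  by (induction t arbitrary: y) (auto intro!: sum_nonneg)

locale chain =
  fixes P :: "'a::finite \<Rightarrow> 'a \<Rightarrow> real" and st :: "'a \<Rightarrow> real"
  assumes mk: "markov P" and stat: "stationary_distr P st" and rev: "reversible_chain P st"
    and irr: "irreducible_chain P"
begin

lemma P0: "0 \<le> P a b" using mk by (auto simp: markov_def)
lemma P1: "(\<Sum>b\<in>UNIV. P a b) = 1" using mk by (auto simp: markov_def)
lemma st0: "0 \<le> st x" using stat by (auto simp: stationary_distr_def)
lemma st1: "(\<Sum>x\<in>UNIV. st x) = 1" using stat by (auto simp: stationary_distr_def)
lemma st_inv: "(\<Sum>x\<in>UNIV. st x * P x y) = st y" using stat by (auto simp: stationary_distr_def)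
lemma revP: "st x * P x y = st y * P y x" using rev by (auto simp: reversible_chain_def)

lemma mpow_nonneg: "0 \<le> mpow P t x y" using rpow_nonneg[OF P0] .

lemma st_mpow: "(\<Sum>x\<in>UNIV. st x * mpow P t x y) = st y"
proof (induction t arbitrary: y)
  case 0 then show ?case by (simp add: if_distrib[of "\<lambda>t. _ * t"] cong: if_cong)
next
  case (Suc t)
  have "(\<Sum>x\<in>UNIV. st x * mpow P (Suc t) x y) = (\<Sum>w\<in>UNIV. (\<Sum>x\<in>UNIV. st x * mpow P t x w) * P w y)"
    apply (simp add: sum_distrib_left sum_distrib_right mult.assoc)
    by (rule sum.swap)
  also have "\<dots> = st y" using Suc by (simp add: st_inv)
  finally show ?case .
qed

lemma st_pos: "0 < st y"
proof -
  have "\<exists>x0. 0 < st x0"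
  proof (rule ccontr)
    assume "\<not> (\<exists>x0. 0 < st x0)"
    then have "\<forall>x. st x \<le> 0" by (simp add: not_less)
    then have "(\<Sum>x\<in>UNIV. st x) \<le> 0" by (simp add: sum_nonpos)
    with st1 show False by simp
  qed
  then obtain x0 where x0: "0 < st x0" by blast
  obtain t where t: "0 < mpow P t x0 y" using irr unfolding irreducible_chain_def by blast
  have "st x0 * mpow P t x0 y \<le> (\<Sum>x\<in>UNIV. st x * mpow P t x y)"
    by (rule member_le_sum) (auto intro: mult_nonneg_nonneg st0 mpow_nonneg)
  also have "\<dots> = st y" by (rule st_mpow)
  finally show ?thesis using mult_pos_pos[OF x0 t] by linarith
qed

lemma Smat_eq: "Smat P st x y = sqrt (P x y) * sqrt (P y x)"
proof -
  have sx: "0 < st x" "0 < st y" by (auto intro: st_pos)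
  have "P y x = st x * P x y / st y" using revP[of x y] sx by (simp add: field_simps)
  then have "sqrt (P x y) * sqrt (P y x) = sqrt (P x y * P x y) * sqrt (st x) / sqrt (st y)"
    by (simp add: real_sqrt_mult real_sqrt_divide)
  also have "\<dots> = P x y * sqrt (st x) / sqrt (st y)" using P0[of x y] by simp
  finally show ?thesis unfolding Smat_def by simp
qed

lemma Smat_sym: "Smat P st x y = Smat P st y x"
  unfolding Smat_eq by simp

lemma rpow_Smat: "rpow A (Smat P st) t x y = sqrt (st x) * rpow A P t x y / sqrt (st y)"
proof (induction t arbitrary: y)
  case 0 then show ?case using st_pos[of x] by auto
next
  case (Suc t)
  have "rpow A (Smat P st) (Suc t) x y = (\<Sum>w\<in>A. sqrt (st x) * rpow A P t x w / sqrt (st w) * (sqrt (st w) * P w y / sqrt (st y)))"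
    by (simp add: Suc Smat_def)
  also have "\<dots> = (\<Sum>w\<in>A. sqrt (st x) * (rpow A P t x w * P w y) / sqrt (st y))"
  proof (rule sum.cong[OF refl])
    fix w have "sqrt (st w) \<noteq> 0" using st_pos[of w] by simp
    then show "sqrt (st x) * rpow A P t x w / sqrt (st w) * (sqrt (st w) * P w y / sqrt (st y)) = sqrt (st x) * (rpow A P t x w * P w y) / sqrt (st y)"
      by (simp add: field_simps)
  qed
  also have "\<dots> = sqrt (st x) * rpow A P (Suc t) x y / sqrt (st y)"
    by (simp add: sum_distrib_left sum_divide_distrib)
  finally show ?case .
qed


lemma no_unit_eig:
  fixes f :: "'a \<Rightarrow> real" and c :: real and z :: 'a
  assumes eq: "\<forall>x\<in>UNIV-{z}. (\<Sum>y\<in>UNIV-{z}. Smat P st x y * f y) = c * f x" and c: "\<bar>c\<bar> = 1"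
  shows "\<forall>x\<in>UNIV-{z}. f x = 0"
proof (rule ccontr)
  define A where "A = UNIV - {z}"
  define g where "g x = f x / sqrt (st x)" for x
  assume "\<not> (\<forall>x\<in>UNIV-{z}. f x = 0)"
  then obtain x1 where x1: "x1 \<in> A" "f x1 \<noteq> 0" unfolding A_def by blast
  have sq: "0 < sqrt (st x)" for x using st_pos[of x] by simp
  have geq: "(\<Sum>y\<in>A. P x y * g y) = c * g x" if "x \<in> A" for x
  proof -
    have "(\<Sum>y\<in>A. Smat P st x y * f y) = sqrt (st x) * (\<Sum>y\<in>A. P x y * g y)"
      unfolding Smat_def g_def sum_distrib_left by (rule sum.cong) (auto simp: field_simps)
    then have "sqrt (st x) * (\<Sum>y\<in>A. P x y * g y) = c * f x" using eq that unfolding A_def by simp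
    then show ?thesis using sq[of x] unfolding g_def by (simp add: field_simps)
  qed
  define M where "M = Max ((\<lambda>x. \<bar>g x\<bar>) ` A)"
  have fin: "finite ((\<lambda>x. \<bar>g x\<bar>) ` A)" by simp
  have Mge: "\<bar>g x\<bar> \<le> M" if "x \<in> A" for x unfolding M_def using fin that by (simp add: Max_ge)
  obtain x0 where x0: "x0 \<in> A" "\<bar>g x0\<bar> = M"
    using Max_in[OF fin] x1(1) unfolding M_def by fastforce
  have "g x1 \<noteq> 0" using x1 sq[of x1] unfolding g_def by simp
  then have Mpos: "0 < M" using Mge[OF x1(1)] by linarith
  have step: "y \<in> A \<and> \<bar>g y\<bar> = M" if x: "x \<in> A" "\<bar>g x\<bar> = M" and pxy: "0 < P x y" for x y
  proof -
    have sA: "(\<Sum>y\<in>A. P x y) = 1 - P x z"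
      using P1[of x] unfolding A_def by (simp add: sum.remove[of UNIV z])
    have "M = \<bar>\<Sum>y\<in>A. P x y * g y\<bar>" using geq[OF x(1)] x(2) c by (simp add: abs_mult)
    also have "\<dots> \<le> (\<Sum>y\<in>A. P x y * \<bar>g y\<bar>)"
      by (rule order_trans[OF sum_abs]) (simp add: abs_mult P0)
    finally have M1: "M \<le> (\<Sum>y\<in>A. P x y * \<bar>g y\<bar>)" .
    have M2: "(\<Sum>y\<in>A. P x y * \<bar>g y\<bar>) \<le> (\<Sum>y\<in>A. P x y * M)"
      by (rule sum_mono) (simp add: Mge P0 mult_left_mono)
    have M3: "(\<Sum>y\<in>A. P x y * M) = M * (1 - P x z)" using sA by (simp add: sum_distrib_right[symmetric])
    have yA: "y \<in> A"
    proof (rule ccontr)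
      assume "y \<notin> A" then have "y = z" unfolding A_def by simp
      then have "M * (1 - P x z) < M" using pxy Mpos by simp
      with M1 M2 M3 show False by linarith
    qed
    have "\<bar>g y\<bar> = M"
    proof (rule ccontr)
      assume "\<bar>g y\<bar> \<noteq> M" then have lt: "\<bar>g y\<bar> < M" using Mge[OF yA] by simp
      have "(\<Sum>y\<in>A. P x y * \<bar>g y\<bar>) < (\<Sum>y\<in>A. P x y * M)"
      proof (rule sum_strict_mono_ex1)
        show "\<exists>a\<in>A. P x a * \<bar>g a\<bar> < P x a * M" using yA lt pxy by (intro bexI[of _ y]) auto
      qed (auto simp: Mge P0 mult_left_mono)
      moreover have "M * (1 - P x z) \<le> M" using P0[of x z] Mpos by simp
      ultimately show False using M1 M3 by linarith
    qed
    with yA show ?thesis by simp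
  qed
  have reach: "y \<in> A \<and> \<bar>g y\<bar> = M" if "0 < mpow P t x0 y" for t y
    using that
  proof (induction t arbitrary: y)
    case 0 then show ?case using x0 by (simp split: if_splits)
  next
    case (Suc t)
    have "\<exists>w. 0 < mpow P t x0 w * P w y"
    proof (rule ccontr)
      assume "\<not> ?thesis"
      then have "(\<Sum>w\<in>UNIV. mpow P t x0 w * P w y) \<le> 0" by (simp add: sum_nonpos not_less)
      with Suc.prems show False by simp
    qed
    then obtain w where w: "0 < mpow P t x0 w * P w y" by blast
    have "0 < mpow P t x0 w" "0 < P w y"
      using w mpow_nonneg[of t x0 w] P0[of w y] by (auto simp: zero_less_mult_iff)
    with Suc.IH step show ?case by blast
  qed
  obtain t where "0 < mpow P t x0 z" using irr unfolding irreducible_chain_def by blast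
  from reach[OF this] show False unfolding A_def by simp
qed

end




lemma rpow_eig:
  assumes "\<forall>x\<in>A. (\<Sum>y\<in>A. S x y * f y) = c * f x" "x \<in> A"
  shows "(\<Sum>y\<in>A. rpow A S t x y * f y) = c ^ t * f x"
  using assms(2)
proof (induction t arbitrary: x)
  case 0 then show ?case by (simp add: if_distrib[of "\<lambda>t. t * _"] cong: if_cong)
next
  case (Suc t)
  have "(\<Sum>y\<in>A. rpow A S (Suc t) x y * f y) = (\<Sum>w\<in>A. rpow A S t x w * (\<Sum>y\<in>A. S w y * f y))"
    apply (simp add: sum_distrib_left sum_distrib_right mult.assoc)
    by (rule sum.swap)
  also have "\<dots> = (\<Sum>w\<in>A. rpow A S t x w * (c * f w))"
    using assms(1) by (intro sum.cong) auto
  also have "\<dots> = c * (\<Sum>w\<in>A. rpow A S t x w * f w)"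
    by (simp add: sum_distrib_left algebra_simps)
  finally show ?case using Suc by simp
qed

lemma qinner_ket_cnj: "qinner (ket_xpx P x) (\<lambda>i. cnj (\<psi> i)) = cnj (qinner (ket_xpx P x) \<psi>)"
  unfolding qinner_ket by simp

lemma qinner_decomp_right:
  "qinner a (\<lambda>i. c0 i + (\<Sum>j\<in>J. complex_of_real (d j) * (w j i + cnj (w j i))) + cm i)
   = qinner a c0 + (\<Sum>j\<in>J. complex_of_real (d j) * (qinner a (w j) + qinner a (\<lambda>i. cnj (w j i)))) + qinner a cm"
proof -
  have "qinner a (\<lambda>i. \<Sum>j\<in>J. complex_of_real (d j) * (w j i + cnj (w j i)))
     = (\<Sum>j\<in>J. complex_of_real (d j) * qinner a (\<lambda>i. w j i + cnj (w j i)))"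
    by (rule qinner_lin_right)
  moreover have "qinner a (\<lambda>i. w j i + cnj (w j i)) = qinner a (w j) + qinner a (\<lambda>i. cnj (w j i))" for j
    unfolding qinner_def by (simp add: sum.distrib algebra_simps)
  moreover have "qinner a (\<lambda>i. x i + y i + v i) = qinner a x + qinner a y + qinner a v" for x y v
    unfolding qinner_def by (simp add: sum.distrib algebra_simps)
  ultimately show ?thesis by simp
qed

lemma qinner_decomp_left:
  "qinner (\<lambda>i. c0 i + (\<Sum>j\<in>J. complex_of_real (d j) * (w j i + cnj (w j i))) + cm i) b
   = qinner c0 b + (\<Sum>j\<in>J. complex_of_real (d j) * (qinner (w j) b + qinner (\<lambda>i. cnj (w j i)) b)) + qinner cm b"
  by (subst qinner_sym, subst qinner_decomp_right) (simp add: qinner_sym[of _ b] cnj_sum)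

locale qdata = chain +
  fixes z :: "'a::finite" and J :: "nat set" and \<alpha> :: "nat \<Rightarrow> real" and w :: "nat \<Rightarrow> 'a qvec"
    and \<delta> :: "nat \<Rightarrow> real" and c0 cm :: "'a qvec"
  assumes qd: "quantum_spectral_data P st z J \<alpha> w \<delta> c0 cm"
begin

lemma finJ: "finite J" and \<alpha>r: "j \<in> J \<Longrightarrow> 0 < \<alpha> j \<and> \<alpha> j < pi"
  and weig: "j \<in> J \<Longrightarrow> Uop P z (w j) = (\<lambda>i. cis (\<alpha> j) * w j i)"
  and won: "j \<in> J \<Longrightarrow> k \<in> J \<Longrightarrow> qinner (w j) (w k) = (if j = k then 1 else 0)"
  and wcn: "j \<in> J \<Longrightarrow> k \<in> J \<Longrightarrow> qinner (w j) (\<lambda>i. cnj (w k i)) = 0"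
  and c0e: "Uop P z c0 = c0" and cme: "Uop P z cm = (\<lambda>i. - cm i)"
  and dec: "phi0_tilde P st z = (\<lambda>i. c0 i + (\<Sum>j\<in>J. complex_of_real (\<delta> j) * (w j i + cnj (w j i))) + cm i)"
  using qd unfolding quantum_spectral_data_def by auto

abbreviation "A \<equiv> UNIV - {z}"
definition "u k y = qinner (ket_xpx P y) (w k)"
definition "r k y = Re (u k y)"

lemma cis_ne: "j \<in> J \<Longrightarrow> cis (\<alpha> j) \<noteq> 1 \<and> cis (\<alpha> j) \<noteq> -1 \<and> cis (\<alpha> j) \<noteq> cis (- \<alpha> j)"
proof -
  assume "j \<in> J"
  then have "0 < sin (\<alpha> j)" using \<alpha>r sin_gt_zero by blast
  then show ?thesis by (auto simp: complex_eq_iff)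
qed

lemma r_eig: "k \<in> J \<Longrightarrow> \<forall>x\<in>A. (\<Sum>y\<in>A. Smat P st x y * r k y) = cos (\<alpha> k) * r k x"
proof
  fix x assume k: "k \<in> J" and x: "x \<in> A"
  have "(\<Sum>y\<in>A. complex_of_real (sqrt (P x y) * sqrt (P y x)) * u k y) = ((cis (\<alpha> k) + 1 / cis (\<alpha> k)) / 2) * u k x"
    unfolding u_def using eigen_S[OF mk weig[OF k]] x by simp
  also have "(cis (\<alpha> k) + 1 / cis (\<alpha> k)) / 2 = complex_of_real (cos (\<alpha> k))"
  proof -
    have "1 / cis (\<alpha> k) = cis (- \<alpha> k)" by (metis cis_inverse inverse_eq_divide)
    then show ?thesis by (simp add: complex_eq_iff)
  qed
  finally have "Re (\<Sum>y\<in>A. complex_of_real (sqrt (P x y) * sqrt (P y x)) * u k y) = cos (\<alpha> k) * r k x"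
    unfolding r_def by simp
  then show "(\<Sum>y\<in>A. Smat P st x y * r k y) = cos (\<alpha> k) * r k x"
    unfolding Smat_eq r_def by (simp add: Re_sum)
qed

lemma unit_zero:
  assumes e: "Uop P z v = (\<lambda>i. complex_of_real c * v i)" and c: "\<bar>c\<bar> = 1" and y: "y \<in> A"
  shows "qinner (ket_xpx P y) v = 0"
proof -
  have c0: "complex_of_real c \<noteq> 0" using c by auto
  have cc: "(complex_of_real c + 1 / complex_of_real c) / 2 = complex_of_real c"
    using c by (auto simp: abs_if split: if_splits)
  have E: "(\<Sum>y\<in>A. complex_of_real (Smat P st x y) * qinner (ket_xpx P y) v) = complex_of_real c * qinner (ket_xpx P x) v"
    if "x \<in> A" for x
    using eigen_S[OF mk e c0, of x] that unfolding Smat_eq cc by simp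
  have "\<forall>x\<in>A. (\<Sum>y\<in>A. Smat P st x y * Re (qinner (ket_xpx P y) v)) = c * Re (qinner (ket_xpx P x) v)"
  proof
    fix x assume x: "x \<in> A"
    have "Re (\<Sum>y\<in>A. complex_of_real (Smat P st x y) * qinner (ket_xpx P y) v) = Re (complex_of_real c * qinner (ket_xpx P x) v)"
      using E[OF x] by simp
    then show "(\<Sum>y\<in>A. Smat P st x y * Re (qinner (ket_xpx P y) v)) = c * Re (qinner (ket_xpx P x) v)"
      by (simp add: Re_sum)
  qed
  from no_unit_eig[OF this c] y have 1: "Re (qinner (ket_xpx P y) v) = 0" by simp
  have "\<forall>x\<in>A. (\<Sum>y\<in>A. Smat P st x y * Im (qinner (ket_xpx P y) v)) = c * Im (qinner (ket_xpx P x) v)"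
  proof
    fix x assume x: "x \<in> A"
    have "Im (\<Sum>y\<in>A. complex_of_real (Smat P st x y) * qinner (ket_xpx P y) v) = Im (complex_of_real c * qinner (ket_xpx P x) v)"
      using E[OF x] by simp
    then show "(\<Sum>y\<in>A. Smat P st x y * Im (qinner (ket_xpx P y) v)) = c * Im (qinner (ket_xpx P x) v)"
      by (simp add: Im_sum)
  qed
  from no_unit_eig[OF this c] y have 2: "Im (qinner (ket_xpx P y) v) = 0" by simp
  from 1 2 show ?thesis by (simp add: complex_eq_iff)
qed

lemma c0_zero: "y \<in> A \<Longrightarrow> qinner (ket_xpx P y) c0 = 0"
  using unit_zero[where v=c0 and c=1] c0e by simp

lemma cm_zero: "y \<in> A \<Longrightarrow> qinner (ket_xpx P y) cm = 0"
  using unit_zero[where v=cm and c="-1"] cme by simp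

lemma phi_ket: "y \<in> A \<Longrightarrow> qinner (ket_xpx P y) (phi0_tilde P st z) = complex_of_real (sqrt (st y))"
  unfolding phi0_tilde_def qinner_lin_right ket_orth[OF mk] by (simp add: if_distrib[of "\<lambda>t. _ * t"] cong: if_cong)

lemma sqrt_st_dec: "y \<in> A \<Longrightarrow> sqrt (st y) = (\<Sum>k\<in>J. 2 * \<delta> k * r k y)"
proof -
  assume y: "y \<in> A"
  have "complex_of_real (sqrt (st y)) = (\<Sum>k\<in>J. complex_of_real (\<delta> k) * (u k y + cnj (u k y)))"
    using phi_ket[OF y] unfolding dec qinner_decomp_right c0_zero[OF y] cm_zero[OF y] qinner_ket_cnj u_def by simp
  then have "sqrt (st y) = Re (\<Sum>k\<in>J. complex_of_real (\<delta> k) * (u k y + cnj (u k y)))" by (metis Re_complex_of_real)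
  then show ?thesis unfolding r_def by (simp add: Re_sum algebra_simps)
qed

lemma phi_left: "qinner (phi0_tilde P st z) b = (\<Sum>x\<in>A. complex_of_real (sqrt (st x)) * qinner (ket_xpx P x) b)"
  unfolding phi0_tilde_def qinner_lin_left by simp

lemma c0_orth: "k \<in> J \<Longrightarrow> qinner c0 (w k) = 0"
  by (rule eigen_orth[OF mk, where a=c0 and l=1 and b="w k" and m="cis (\<alpha> k)"]) (use c0e weig cis_ne in auto)

lemma cm_orth: assumes k: "k \<in> J" shows "qinner cm (w k) = 0"
proof -
  have ne: "(-1::complex) \<noteq> cis (\<alpha> k)" using cis_ne[OF k] by metis
  show ?thesis by (rule eigen_orth[OF mk, where z=z and a=cm and l="-1" and b="w k" and m="cis (\<alpha> k)"]) (simp_all add: cme weig[OF k] ne)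
qed

lemma delta_eq: "k \<in> J \<Longrightarrow> (\<Sum>x\<in>A. sqrt (st x) * r k x) = \<delta> k"
proof -
  assume k: "k \<in> J"
  have cw: "qinner (\<lambda>i. cnj (w j i)) (w k) = 0" if "j \<in> J" for j
    using wcn[OF k that] qinner_sym[of "\<lambda>i. cnj (w j i)" "w k"] by simp
  have "qinner (phi0_tilde P st z) (w k) = (\<Sum>j\<in>J. complex_of_real (\<delta> j) * (if j = k then 1 else 0))"
    unfolding dec qinner_decomp_left c0_orth[OF k] cm_orth[OF k]
    by (simp add: won k cw cong: sum.cong)
  also have "\<dots> = complex_of_real (\<delta> k)" using k finJ by (simp add: if_distrib[of "\<lambda>t. _ * t"] cong: if_cong)
  finally have "(\<Sum>x\<in>A. complex_of_real (sqrt (st x)) * u k x) = complex_of_real (\<delta> k)"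
    unfolding phi_left u_def .
  from arg_cong[OF this, of Re] show ?thesis unfolding r_def by (simp add: Re_sum)
qed

lemma moment: "not_hit_prob P st z t = (\<Sum>k\<in>J. 2 * (\<delta> k)\<^sup>2 * cos (\<alpha> k) ^ t)"
proof -
  have sq: "0 < sqrt (st x)" for x using st_pos[of x] by simp
  have inner: "(\<Sum>y\<in>A. rpow A (Smat P st) t x y * sqrt (st y)) = (\<Sum>k\<in>J. 2 * \<delta> k * cos (\<alpha> k) ^ t * r k x)"
    if x: "x \<in> A" for x
  proof -
    have "(\<Sum>y\<in>A. rpow A (Smat P st) t x y * sqrt (st y)) = (\<Sum>y\<in>A. \<Sum>k\<in>J. 2 * \<delta> k * (rpow A (Smat P st) t x y * r k y))"
      by (rule sum.cong) (auto simp: sqrt_st_dec sum_distrib_left algebra_simps)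
    also have "\<dots> = (\<Sum>k\<in>J. 2 * \<delta> k * (\<Sum>y\<in>A. rpow A (Smat P st) t x y * r k y))"
      by (subst sum.swap) (simp add: sum_distrib_left)
    also have "\<dots> = (\<Sum>k\<in>J. 2 * \<delta> k * cos (\<alpha> k) ^ t * r k x)"
      by (rule sum.cong) (auto simp: rpow_eig[OF r_eig x])
    finally show ?thesis .
  qed
  have "not_hit_prob P st z t = (\<Sum>x\<in>A. sqrt (st x) * (\<Sum>y\<in>A. rpow A (Smat P st) t x y * sqrt (st y)))"
    unfolding not_hit_prob_def sum_distrib_left
  proof (intro sum.cong refl)
    fix x y
    show "st x * rpow A P t x y = sqrt (st x) * (rpow A (Smat P st) t x y * sqrt (st y))"
      unfolding rpow_Smat using sq[of x] sq[of y] st_pos[of x]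
      by (simp add: field_simps)
  qed
  also have "\<dots> = (\<Sum>x\<in>A. \<Sum>k\<in>J. 2 * \<delta> k * cos (\<alpha> k) ^ t * (sqrt (st x) * r k x))"
  proof (rule sum.cong[OF refl])
    fix x assume x: "x \<in> A"
    show "sqrt (st x) * (\<Sum>y\<in>A. rpow A (Smat P st) t x y * sqrt (st y)) = (\<Sum>k\<in>J. 2 * \<delta> k * cos (\<alpha> k) ^ t * (sqrt (st x) * r k x))"
      unfolding inner[OF x] sum_distrib_left by (simp add: algebra_simps)
  qed
  also have "\<dots> = (\<Sum>k\<in>J. 2 * \<delta> k * cos (\<alpha> k) ^ t * (\<Sum>x\<in>A. sqrt (st x) * r k x))"
    by (subst sum.swap) (simp add: sum_distrib_left)
  also have "\<dots> = (\<Sum>k\<in>J. 2 * (\<delta> k)\<^sup>2 * cos (\<alpha> k) ^ t)"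
    by (rule sum.cong) (auto simp: delta_eq power2_eq_square)
  finally show ?thesis .
qed

end




lemma one_minus_cos_le: "1 - cos (a::real) \<le> a\<^sup>2 / 2"
proof -
  have "cos a = 1 - 2 * sin (a/2) ^ 2" using cos_double_sin[of "a/2"] by simp
  moreover have "sin (a/2) ^ 2 \<le> (a/2)^2"
    using abs_sin_x_le_abs_x[of "a/2"] by (metis abs_ge_zero power2_abs power_mono)
  ultimately show ?thesis by (simp add: power_divide)
qed

lemma cos_lt1: "0 < a \<Longrightarrow> a < pi \<Longrightarrow> cos a < 1"
  using cos_monotone_0_pi[of 0 a] by simp

lemma cos_gtm1: "0 < a \<Longrightarrow> a < pi \<Longrightarrow> -1 < cos a"
  using cos_monotone_0_pi[of a pi] by simp

context qdata begin

lemma cos_abs: "k \<in> J \<Longrightarrow> \<bar>cos (\<alpha> k)\<bar> < 1"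
  using cos_lt1 cos_gtm1 \<alpha>r by (simp add: abs_less_iff)

lemma HT_sums: "not_hit_prob P st z sums (\<Sum>k\<in>J. 2 * (\<delta> k)\<^sup>2 / (1 - cos (\<alpha> k)))"
proof -
  have "(\<lambda>t. \<Sum>k\<in>J. 2 * (\<delta> k)\<^sup>2 * cos (\<alpha> k) ^ t) sums (\<Sum>k\<in>J. 2 * (\<delta> k)\<^sup>2 * (1 / (1 - cos (\<alpha> k))))"
  proof (rule sums_sum)
    fix k assume k: "k \<in> J"
    have "(\<lambda>t. cos (\<alpha> k) ^ t) sums (1 / (1 - cos (\<alpha> k)))"
      using geometric_sums[of "cos (\<alpha> k)"] cos_abs[OF k] by (simp add: real_norm_def)
    then show "(\<lambda>t. 2 * (\<delta> k)\<^sup>2 * cos (\<alpha> k) ^ t) sums (2 * (\<delta> k)\<^sup>2 * (1 / (1 - cos (\<alpha> k))))"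
      by (rule sums_mult)
  qed
  moreover have "not_hit_prob P st z = (\<lambda>t. \<Sum>k\<in>J. 2 * (\<delta> k)\<^sup>2 * cos (\<alpha> k) ^ t)"
    by (rule ext) (rule moment)
  ultimately show ?thesis by simp
qed

lemma HT_eq: "HT P st z = (\<Sum>k\<in>J. 2 * (\<delta> k)\<^sup>2 / (1 - cos (\<alpha> k)))"
  unfolding HT_def using HT_sums by (rule sums_unique[symmetric])

lemma wcnj_eig: "j \<in> J \<Longrightarrow> Uop P z (\<lambda>i. cnj (w j i)) = (\<lambda>i. cis (- \<alpha> j) * cnj (w j i))"
proof -
  have "cnj (cis (\<alpha> j)) = cis (- \<alpha> j)" by (simp add: complex_eq_iff)
  then show "j \<in> J \<Longrightarrow> ?thesis" using Uop_cnj[OF mk, of z "w j"] weig[of j] by simp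
qed

lemma qnorm2_cm: "qnorm2 cm = 0"
proof -
  have o1: "qinner c0 cm = 0"
    by (rule eigen_orth[OF mk, where z=z and a=c0 and l=1 and b=cm and m="-1"]) (simp_all add: c0e cme)
  have o2: "qinner (w j) cm = 0" if "j \<in> J" for j
    using cm_orth[OF that] qinner_sym[of cm "w j"] by simp
  have o3: "qinner (\<lambda>i. cnj (w j i)) cm = 0" if j: "j \<in> J" for j
  proof -
    have "0 < sin (\<alpha> j)" using \<alpha>r[OF j] sin_gt_zero by blast
    then have ne: "cis (- \<alpha> j) \<noteq> -1" by (auto simp: complex_eq_iff)
    show ?thesis by (rule eigen_orth[OF mk, where z=z and l="cis (- \<alpha> j)" and m="-1"]) (simp_all add: cme wcnj_eig[OF j] ne)
  qed
  have "qinner (phi0_tilde P st z) cm = qinner cm cm"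
    unfolding dec qinner_decomp_left o1 by (simp add: o2 o3)
  moreover have "qinner (phi0_tilde P st z) cm = 0"
    unfolding phi_left by (simp add: cm_zero)
  moreover have "qinner cm cm = complex_of_real (qnorm2 cm)"
    unfolding qinner_def qnorm2_def of_real_sum
    by (rule sum.cong) (auto simp: complex_mult_cnj cmod_power2 mult.commute simp del: of_real_power)
  ultimately show ?thesis by simp
qed

lemma mass_le1: "(\<Sum>k\<in>J. 2 * (\<delta> k)\<^sup>2) \<le> 1"
proof -
  have "(\<Sum>k\<in>J. 2 * (\<delta> k)\<^sup>2) = not_hit_prob P st z 0" using moment[of 0] by simp
  also have "\<dots> = (\<Sum>x\<in>A. st x)" unfolding not_hit_prob_def
    by (simp add: if_distrib[of "\<lambda>t. _ * t"] cong: if_cong)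
  also have "\<dots> \<le> (\<Sum>x\<in>UNIV. st x)" by (rule sum_mono2) (auto simp: st0)
  finally show ?thesis using st1 by simp
qed

lemma part1: "QHT J \<alpha> \<delta> cm \<le> sqrt (HT P st z / 2)"
proof -
  define p where "p k = 2 * (\<delta> k)\<^sup>2" for k
  have p0: "0 \<le> p k" for k unfolding p_def by simp
  have QHT: "QHT J \<alpha> \<delta> cm = (\<Sum>k\<in>J. p k / \<alpha> k)"
    unfolding QHT_def qnorm2_cm p_def by simp
  have "(\<Sum>k\<in>J. p k / \<alpha> k)\<^sup>2 = (\<Sum>k\<in>J. sqrt (p k) * (sqrt (p k) / \<alpha> k))\<^sup>2"
  proof -
    have e: "sqrt (p k) * (sqrt (p k) / \<alpha> k) = p k / \<alpha> k" for k using p0[of k] by simp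
    show ?thesis unfolding e ..
  qed
  also have "\<dots> \<le> (\<Sum>k\<in>J. (sqrt (p k))\<^sup>2) * (\<Sum>k\<in>J. (sqrt (p k) / \<alpha> k)\<^sup>2)"
    by (rule Cauchy_Schwarz_ineq_sum)
  also have "\<dots> = (\<Sum>k\<in>J. p k) * (\<Sum>k\<in>J. p k / (\<alpha> k)\<^sup>2)"
    by (simp add: p0 power_divide)
  also have "\<dots> \<le> 1 * (\<Sum>k\<in>J. p k / (\<alpha> k)\<^sup>2)"
    by (rule mult_right_mono) (use mass_le1 in \<open>simp_all add: p_def sum_nonneg\<close>)
  also have "\<dots> \<le> (\<Sum>k\<in>J. p k / (1 - cos (\<alpha> k))) / 2"
  proof -
   have "(\<Sum>k\<in>J. p k / (\<alpha> k)\<^sup>2) \<le> (\<Sum>k\<in>J. p k / (1 - cos (\<alpha> k)) / 2)"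
   proof (rule sum_mono)
    fix k assume k: "k \<in> J"
    have a: "0 < \<alpha> k" and c: "0 < 1 - cos (\<alpha> k)" using \<alpha>r[OF k] cos_lt1 by auto
    have "2 * (1 - cos (\<alpha> k)) \<le> (\<alpha> k)\<^sup>2" using one_minus_cos_le[of "\<alpha> k"] by simp
    then have "1 / (\<alpha> k)\<^sup>2 \<le> 1 / (2 * (1 - cos (\<alpha> k)))"
      by (rule divide_left_mono) (use a c in auto)
    then have "p k * (1 / (\<alpha> k)\<^sup>2) \<le> p k * (1 / (2 * (1 - cos (\<alpha> k))))"
      by (rule mult_left_mono) (rule p0)
    then show "p k / (\<alpha> k)\<^sup>2 \<le> p k / (1 - cos (\<alpha> k)) / 2" by (simp add: mult.commute)
   qed
   then show ?thesis by (simp add: sum_divide_distrib)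
  qed
  finally have "(QHT J \<alpha> \<delta> cm)\<^sup>2 \<le> HT P st z / 2" unfolding QHT HT_eq p_def by simp
  then show ?thesis by (rule real_le_rsqrt)
qed

end




lemma orth_complete:
  fixes v :: "nat \<Rightarrow> 'a::finite \<Rightarrow> real" and z :: 'a
  assumes fin: "finite Jc" and card: "card Jc = card (UNIV - {z})"
    and orth: "\<forall>j\<in>Jc. \<forall>k\<in>Jc. (\<Sum>x\<in>UNIV-{z}. v j x * v k x) = (if j = k then 1 else 0)"
    and xy: "x \<noteq> z" "y \<noteq> z"
  shows "(\<Sum>j\<in>Jc. v j x * v j y) = (if x = y then 1 else 0)"
proof -
  obtain h where h: "bij_betw h (UNIV - {z}) Jc"
    using finite_same_card_bij[of "UNIV - {z}" Jc] fin card by auto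
  define M :: "real^'a^'a" where
    "M = (\<chi> a b. if a = z then (if b = z then 1 else 0) else if b = z then 0 else v (h a) b)"
  have Mab: "M $ a $ b = (if a = z then (if b = z then 1 else 0) else if b = z then 0 else v (h a) b)" for a b
    unfolding M_def by simp
  have inj: "inj_on h (UNIV - {z})" and hJ: "\<And>a. a \<noteq> z \<Longrightarrow> h a \<in> Jc" using h by (auto simp: bij_betw_def)
  have key: "(\<Sum>b\<in>UNIV. M $ a $ b * M $ a' $ b) = (if a = a' then 1 else 0)" for a a'
    proof (cases "a = z")
      case True then show ?thesis by (simp add: Mab if_distrib[of "\<lambda>t. t * _"] cong: if_cong)
    next
      case False
      note a = False
      show ?thesis
      proof (cases "a' = z")
        case True then show ?thesis using a by (auto simp: Mab intro!: sum.neutral)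
      next
        case False
        have "(\<Sum>b\<in>UNIV. M $ a $ b * M $ a' $ b) = (\<Sum>b\<in>UNIV - {z}. v (h a) b * v (h a') b)"
          using a False by (simp add: Mab sum.remove[of UNIV z])
        also have "\<dots> = (if h a = h a' then 1 else 0)" using orth hJ a False by simp
        also have "\<dots> = (if a = a' then 1 else 0)" using inj a False by (auto dest: inj_onD)
        finally show ?thesis .
      qed
    qed
  have "M ** transpose M = mat 1"
    by (simp add: vec_eq_iff matrix_matrix_mult_def mat_def transpose_def key)
  then have "transpose M ** M = mat 1" using matrix_left_right_inverse by blast
  then have "(transpose M ** M) $ x $ y = mat 1 $ x $ y" by simp
  then have "(\<Sum>a\<in>UNIV. M $ a $ x * M $ a $ y) = (if x = y then 1 else 0)"
    by (simp add: matrix_matrix_mult_def mat_def transpose_def)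
  moreover have "(\<Sum>a\<in>UNIV. M $ a $ x * M $ a $ y) = (\<Sum>a\<in>UNIV - {z}. v (h a) x * v (h a) y)"
    using xy by (simp add: Mab sum.remove[of UNIV z])
  moreover have "(\<Sum>a\<in>UNIV - {z}. v (h a) x * v (h a) y) = (\<Sum>j\<in>Jc. v j x * v j y)"
    using sum.reindex_bij_betw[OF h, of "\<lambda>j. v j x * v j y"] by simp
  ultimately show ?thesis by simp
qed


locale cdata = qdata +
  fixes Jc :: "nat set" and v :: "nat \<Rightarrow> 'a \<Rightarrow> real" and \<theta> :: "nat \<Rightarrow> real"
  assumes cd: "classical_spectral_data P st z Jc v \<theta>"
begin

lemma finJc: "finite Jc" and cardJc: "card Jc = card (UNIV::'a set) - 1"
  and vorth: "\<forall>j\<in>Jc. \<forall>k\<in>Jc. (\<Sum>x\<in>UNIV - {z}. v j x * v k x) = (if j = k then 1 else 0)"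
  and veig: "j \<in> Jc \<Longrightarrow> x \<in> A \<Longrightarrow> (\<Sum>y\<in>A. Smat P st x y * v j y) = cos (\<theta> j) * v j x"
  and \<theta>r: "j \<in> Jc \<Longrightarrow> 0 < \<theta> j \<and> \<theta> j \<le> pi / 2"
  using cd unfolding classical_spectral_data_def by auto

lemma vcomp: "x \<in> A \<Longrightarrow> y \<in> A \<Longrightarrow> (\<Sum>j\<in>Jc. v j x * v j y) = (if x = y then 1 else 0)"
  by (rule orth_complete[OF finJc _ vorth]) (auto simp: cardJc card_Diff_singleton)

definition "cc j k = (\<Sum>x\<in>A. v j x * r k x)"

lemma cc_zero: assumes j: "j \<in> Jc" and k: "k \<in> J" and ne: "\<theta> j \<noteq> \<alpha> k" shows "cc j k = 0"
proof -
  have "cos (\<theta> j) * cc j k = (\<Sum>x\<in>A. (\<Sum>y\<in>A. Smat P st x y * v j y) * r k x)"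
    unfolding cc_def sum_distrib_left by (rule sum.cong) (simp_all add: veig[OF j])
  also have "\<dots> = (\<Sum>y\<in>A. v j y * (\<Sum>x\<in>A. Smat P st y x * r k x))"
    unfolding sum_distrib_left sum_distrib_right
    by (subst sum.swap) (simp add: Smat_sym[of _ y for y] algebra_simps)
  also have "\<dots> = (\<Sum>y\<in>A. v j y * (cos (\<alpha> k) * r k y))"
  proof (rule sum.cong[OF refl])
    fix y assume "y \<in> A" then show "v j y * (\<Sum>x\<in>A. Smat P st y x * r k x) = v j y * (cos (\<alpha> k) * r k y)"
      using r_eig[OF k] by simp
  qed
  also have "\<dots> = cos (\<alpha> k) * cc j k"
    unfolding cc_def sum_distrib_left by (simp add: algebra_simps)
  finally have e: "(cos (\<theta> j) - cos (\<alpha> k)) * cc j k = 0" by (simp add: algebra_simps)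
  have "cos (\<theta> j) \<noteq> cos (\<alpha> k)"
    using cos_inj_pi[of "\<theta> j" "\<alpha> k"] \<theta>r[OF j] \<alpha>r[OF k] ne by auto
  with e show ?thesis by simp
qed

lemma nu_eq: "j \<in> Jc \<Longrightarrow> nu_coef st z v j = (\<Sum>k\<in>J. 2 * \<delta> k * cc j k)"
proof -
  assume j: "j \<in> Jc"
  have "nu_coef st z v j = (\<Sum>x\<in>A. (\<Sum>k\<in>J. 2 * \<delta> k * r k x) * v j x)"
    unfolding nu_coef_def by (rule sum.cong) (simp_all add: sqrt_st_dec)
  also have "\<dots> = (\<Sum>k\<in>J. 2 * \<delta> k * cc j k)"
    unfolding cc_def sum_distrib_right sum_distrib_left
    by (subst sum.swap) (simp add: algebra_simps)
  finally show ?thesis .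
qed

lemma delta_eq2: "k \<in> J \<Longrightarrow> \<delta> k = (\<Sum>j\<in>Jc. cc j k * nu_coef st z v j)"
proof -
  assume k: "k \<in> J"
  have rk: "r k x = (\<Sum>j\<in>Jc. cc j k * v j x)" if x: "x \<in> A" for x
  proof -
    have "(\<Sum>j\<in>Jc. cc j k * v j x) = (\<Sum>y\<in>A. r k y * (\<Sum>j\<in>Jc. v j x * v j y))"
      unfolding cc_def sum_distrib_right sum_distrib_left
      by (subst sum.swap) (simp add: algebra_simps)
    also have "\<dots> = (\<Sum>y\<in>A. (if y = x then r k y else 0))"
      by (rule sum.cong) (use x vcomp in auto)
    also have "\<dots> = r k x" using x by simp
    finally show ?thesis by simp
  qed
  have "\<delta> k = (\<Sum>x\<in>A. sqrt (st x) * (\<Sum>j\<in>Jc. cc j k * v j x))"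
    unfolding delta_eq[OF k, symmetric] by (rule sum.cong) (simp_all add: rk)
  also have "\<dots> = (\<Sum>j\<in>Jc. cc j k * nu_coef st z v j)"
    unfolding nu_coef_def sum_distrib_left
    by (subst sum.swap) (simp add: algebra_simps)
  finally show ?thesis .
qed

lemma mass_eq: "(\<Sum>j\<in>{j\<in>Jc. Q (\<theta> j)}. (nu_coef st z v j)\<^sup>2) = (\<Sum>k\<in>{k\<in>J. Q (\<alpha> k)}. 2 * (\<delta> k)\<^sup>2)"
proof -
  have sw: "(if Q (\<theta> j) then cc j k else 0) = (if Q (\<alpha> k) then cc j k else 0)" if "j \<in> Jc" "k \<in> J" for j k
    using cc_zero[OF that] by (cases "\<theta> j = \<alpha> k") auto
  have "(\<Sum>j\<in>{j\<in>Jc. Q (\<theta> j)}. (nu_coef st z v j)\<^sup>2) = (\<Sum>j\<in>Jc. if Q (\<theta> j) then nu_coef st z v j * nu_coef st z v j else 0)"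
    by (simp add: sum.inter_filter finJc power2_eq_square)
  also have "\<dots> = (\<Sum>j\<in>Jc. \<Sum>k\<in>J. nu_coef st z v j * 2 * \<delta> k * (if Q (\<theta> j) then cc j k else 0))"
    by (rule sum.cong) (auto simp: nu_eq sum_distrib_left algebra_simps)
  also have "\<dots> = (\<Sum>j\<in>Jc. \<Sum>k\<in>J. nu_coef st z v j * 2 * \<delta> k * (if Q (\<alpha> k) then cc j k else 0))"
    by (intro sum.cong refl) (simp add: sw)
  also have "\<dots> = (\<Sum>k\<in>J. if Q (\<alpha> k) then 2 * \<delta> k * (\<Sum>j\<in>Jc. cc j k * nu_coef st z v j) else 0)"
    by (subst sum.swap) (auto simp: sum_distrib_left algebra_simps intro!: sum.cong)
  also have "\<dots> = (\<Sum>k\<in>J. if Q (\<alpha> k) then 2 * (\<delta> k)\<^sup>2 else 0)"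
    by (rule sum.cong) (auto simp: delta_eq2[symmetric] power2_eq_square)
  also have "\<dots> = (\<Sum>k\<in>{k\<in>J. Q (\<alpha> k)}. 2 * (\<delta> k)\<^sup>2)"
    by (simp add: sum.inter_filter finJ)
  finally show ?thesis .
qed


lemma QH_neg: "y < 0 \<Longrightarrow> QH_tail J \<alpha> \<delta> cm y = 1"
proof -
  assume y: "y < 0"
  have "{k \<in> J. y < 1 / \<alpha> k} = J" using \<alpha>r y by (auto intro: less_trans[of y 0])
  moreover have "y < 1 / pi" using y pi_gt_zero by (smt (verit) divide_pos_pos)
  ultimately show ?thesis unfolding QH_tail_def using y by simp
qed

lemma H_neg: "y < 0 \<Longrightarrow> H_tail st z Jc v \<theta> y = 1"
proof -
  assume y: "y < 0"
  have pos: "y < 1 / (\<theta> j)\<^sup>2" if "j \<in> Jc" for j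
  proof -
    have "0 < \<theta> j" using \<theta>r[OF that] by simp
    then have "0 < 1 / (\<theta> j)\<^sup>2" by simp
    with y show ?thesis by linarith
  qed
  have "{j \<in> Jc. y < 1 / (\<theta> j)\<^sup>2} = Jc" using pos by auto
  then show ?thesis unfolding H_tail_def using y by simp
qed

lemma QH_H: assumes y: "0 \<le> y" shows "QH_tail J \<alpha> \<delta> cm y = H_tail st z Jc v \<theta> (y\<^sup>2)"
proof -
  have "QH_tail J \<alpha> \<delta> cm y = (\<Sum>k\<in>{k\<in>J. y < 1 / \<alpha> k}. 2 * (\<delta> k)\<^sup>2)"
    unfolding QH_tail_def qnorm2_cm using y by simp
  also have "\<dots> = (\<Sum>j\<in>{j\<in>Jc. y < 1 / \<theta> j}. (nu_coef st z v j)\<^sup>2)"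
    using mass_eq[of "\<lambda>b. y < 1 / b"] by simp
  also have "{j\<in>Jc. y < 1 / \<theta> j} = {j\<in>Jc. y\<^sup>2 < 1 / (\<theta> j)\<^sup>2}"
  proof (intro Collect_cong conj_cong refl)
    fix j assume j: "j \<in> Jc"
    have t: "0 \<le> 1 / \<theta> j" using \<theta>r[OF j] by simp
    have "(y < 1 / \<theta> j) = (y\<^sup>2 < (1 / \<theta> j)\<^sup>2)"
      using y t by (meson power_less_imp_less_base power_strict_mono zero_less_numeral)
    then show "(y < 1 / \<theta> j) = (y\<^sup>2 < 1 / (\<theta> j)\<^sup>2)" by (simp add: power_divide)
  qed
  finally show ?thesis unfolding H_tail_def by simp
qed

end

lemma least_exists:
  fixes a m :: "nat \<Rightarrow> real" and g :: "real \<Rightarrow> real"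
  assumes fin: "finite Jc" and gneg: "\<And>y. y < 0 \<Longrightarrow> \<not> g y \<le> \<epsilon>"
    and gpos: "\<And>y. 0 \<le> y \<Longrightarrow> g y = (\<Sum>j\<in>{j\<in>Jc. y < a j}. m j)" and eps: "0 \<le> \<epsilon>"
  shows "\<exists>y0. g y0 \<le> \<epsilon> \<and> (\<forall>y. g y \<le> \<epsilon> \<longrightarrow> y0 \<le> y)"
proof -
  define D where "D = insert 0 (a ` Jc)"
  have finD: "finite D" unfolding D_def using fin by simp
  define C where "C = {d\<in>D. 0 \<le> d \<and> g d \<le> \<epsilon>}"
  have finC: "finite C" unfolding C_def using finD by simp
  have red: "\<exists>d\<in>C. d \<le> y" if gy: "g y \<le> \<epsilon>" for y
  proof -
    have y0: "0 \<le> y" using gneg gy by (metis not_le)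
    define D' where "D' = {d\<in>D. 0 \<le> d \<and> d \<le> y}"
    have finD': "finite D'" unfolding D'_def using finD by simp
    have 0: "0 \<in> D'" unfolding D'_def D_def using y0 by simp
    define y' where "y' = Max D'"
    have y'D: "y' \<in> D'" unfolding y'_def using Max_in[OF finD'] 0 by blast
    have y'ge: "d \<le> y'" if "d \<in> D'" for d unfolding y'_def using Max_ge[OF finD' that] .
    have y'0: "0 \<le> y'" "y' \<le> y" using y'D unfolding D'_def by auto
    have "{j\<in>Jc. y' < a j} = {j\<in>Jc. y < a j}"
    proof (intro Collect_cong conj_cong refl iffI)
      fix j assume j: "j \<in> Jc" and lt: "y' < a j"
      show "y < a j"
      proof (rule ccontr)
        assume "\<not> y < a j"
        then have "a j \<in> D'" unfolding D'_def D_def using j lt y'0 by auto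
        then have "a j \<le> y'" by (rule y'ge)
        with lt show False by simp
      qed
    next
      fix j assume "y < a j" then show "y' < a j" using y'0 by simp
    qed
    then have "g y' = g y" using gpos y0 y'0 by simp
    then have "y' \<in> C" unfolding C_def using y'D gy unfolding D'_def by auto
    then show ?thesis using y'0 by blast
  qed
  define Y where "Y = (\<Sum>j\<in>Jc. \<bar>a j\<bar>)"
  have "Y \<ge> 0" unfolding Y_def by (simp add: sum_nonneg)
  moreover have "{j\<in>Jc. Y < a j} = {}"
  proof -
    have "a j \<le> Y" if "j \<in> Jc" for j
      unfolding Y_def using member_le_sum[of j Jc "\<lambda>j. \<bar>a j\<bar>"] fin that by auto
    then show ?thesis by force
  qed
  ultimately have "g Y \<le> \<epsilon>" using gpos[of Y] eps by (simp del: Collect_empty_eq)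
  from red[OF this] have Cne: "C \<noteq> {}" by blast
  define y0 where "y0 = Min C"
  have y0C: "y0 \<in> C" unfolding y0_def using Min_in[OF finC Cne] .
  show ?thesis
  proof (intro exI conjI allI impI)
    show "g y0 \<le> \<epsilon>" using y0C unfolding C_def by simp
  next
    fix y assume "g y \<le> \<epsilon>"
    from red[OF this] obtain d where "d \<in> C" "d \<le> y" by blast
    then show "y0 \<le> y" unfolding y0_def using Min_le[OF finC] by force
  qed
qed

context cdata begin

lemma part2: assumes e: "0 < \<epsilon>" "\<epsilon> < 1"
  shows "QHT_eps J \<alpha> \<delta> cm \<epsilon> = sqrt (HT_eps st z Jc v \<theta> \<epsilon>)"
proof -
  let ?g = "H_tail st z Jc v \<theta>"
  have gneg: "\<not> ?g y \<le> \<epsilon>" if "y < 0" for y using H_neg[OF that] e by simp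
  have gpos: "?g y = (\<Sum>j\<in>{j\<in>Jc. y < 1 / (\<theta> j)\<^sup>2}. (nu_coef st z v j)\<^sup>2)" if "0 \<le> y" for y
    unfolding H_tail_def using that by simp
  obtain y0 where y0: "?g y0 \<le> \<epsilon>" "\<And>y. ?g y \<le> \<epsilon> \<Longrightarrow> y0 \<le> y"
    using least_exists[OF finJc gneg gpos] e by fastforce
  have HT: "HT_eps st z Jc v \<theta> \<epsilon> = y0"
    unfolding HT_eps_def by (rule Least_equality) (use y0 in auto)
  have y00: "0 \<le> y0" using gneg y0(1) by (metis not_le)
  have "QHT_eps J \<alpha> \<delta> cm \<epsilon> = sqrt y0"
    unfolding QHT_eps_def
  proof (rule Least_equality)
    show "QH_tail J \<alpha> \<delta> cm (sqrt y0) \<le> \<epsilon>" using QH_H[of "sqrt y0"] y00 y0(1) by simp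
  next
    fix y assume q: "QH_tail J \<alpha> \<delta> cm y \<le> \<epsilon>"
    have yp: "0 \<le> y"
    proof (rule ccontr)
      assume "\<not> 0 \<le> y" then have "QH_tail J \<alpha> \<delta> cm y = 1" using QH_neg by simp
      with q e show False by simp
    qed
    have "?g (y\<^sup>2) \<le> \<epsilon>" using q QH_H[OF yp] by simp
    then have "y0 \<le> y\<^sup>2" by (rule y0(2))
    then show "sqrt y0 \<le> y" by (rule real_le_lsqrt[OF yp])
  qed
  then show ?thesis using HT by simp
qed

end



theorem theorem9:
  fixes P :: "'a::finite \<Rightarrow> 'a \<Rightarrow> real" and st :: "'a \<Rightarrow> real"
  assumes "ergodic_chain P"
    and "stationary_distr P st"
    and "reversible_chain P st"
    and "all_eigenvalues_positive P"
  shows "(\<forall>z J \<alpha> w \<delta> c0 cm. quantum_spectral_data P st z J \<alpha> w \<delta> c0 cm \<longrightarrow>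
            QHT J \<alpha> \<delta> cm \<le> sqrt (HT P st z / 2))
       \<and> (\<forall>z \<epsilon> Jc v \<theta> J \<alpha> w \<delta> c0 cm. 0 < \<epsilon> \<and> \<epsilon> < 1 \<longrightarrow>
            classical_spectral_data P st z Jc v \<theta> \<longrightarrow>
            quantum_spectral_data P st z J \<alpha> w \<delta> c0 cm \<longrightarrow>
            QHT_eps J \<alpha> \<delta> cm \<epsilon> = sqrt (HT_eps st z Jc v \<theta> \<epsilon>))"
proof -
  interpret chain P st
    using assms unfolding ergodic_chain_def by unfold_locales auto
  show ?thesis
  proof (intro conjI allI impI)
    fix z J \<alpha> w \<delta> c0 cm
    assume "quantum_spectral_data P st z J \<alpha> w \<delta> c0 cm"
    then interpret qdata P st z J \<alpha> w \<delta> c0 cm by unfold_locales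
    show "QHT J \<alpha> \<delta> cm \<le> sqrt (HT P st z / 2)" by (rule part1)
  next
    fix z :: 'a and \<epsilon> :: real and Jc v \<theta> J \<alpha> w \<delta> c0 cm
    assume e: "0 < \<epsilon> \<and> \<epsilon> < 1" and c: "classical_spectral_data P st z Jc v \<theta>"
      and q: "quantum_spectral_data P st z J \<alpha> w \<delta> c0 cm"
    interpret cdata P st z J \<alpha> w \<delta> c0 cm Jc v \<theta> using c q by unfold_locales
    show "QHT_eps J \<alpha> \<delta> cm \<epsilon> = sqrt (HT_eps st z Jc v \<theta> \<epsilon>)" using e by (intro part2) auto
  qed
qed

end
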